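(* Let $V$ be a regular inhomogeneous $Y$-random evolution, $(s,t) \in \Delta_J$ and $f \in Y_1$. Then on $\Omega$: \[ V(s,t)f=f+\int_s^t V(s,u)A_{x(u)}(u)f\, du+\sum_{k=1}^{N_s(t)} V(s,T_k(s)^-) [D(x_{k-1}(s),x_k(s))-I]f, \] where $V(s,r^-)f=\lim_{u\uparrow r}V(s,u)f$.
   Context: $(Y,\|\cdot\|)$ is a real separable Banach space with Borel $\sigma$-algebra $\mathcal Y$, $(Y_1,\|\cdot\|_{Y_1})$ a real separable Banach space continuously embedded in $Y$; $J$ is $\mathbb{R}^+$ or $[0,T_\infty]$, $\Delta_J=\{(s,t)\in J^2:s\le t\}$, $J(s)=\{t\in J:t\ge s\}$. An inhomogeneous $Y$-semigroup is a map $\Gamma:\Delta_J\to\mathcal B(Y)$ with $\Gamma(t,t)=I$ and $\Gamma(s,r)\Gamma(r,t)=\Gamma(s,t)$ for $s\le r\le t$. Generator: $\mathcal D(A_\Gamma(t))$ is the set of $f\in Y$ such that $\lim_{h\downarrow0,\,t+h\in J}h^{-1}(\Gamma(t,t+h)-I)f$ and $\lim_{h\downarrow0,\,t-h\in J}h^{-1}(\Gamma(t-h,t)-I)f$ exist and are equal ($=A_\Gamma(t)f$), $\mathcal D(A_\Gamma)=\bigcap_t\mathcal D(A_\Gamma(t))$. $\Gamma$ is regular if $Y_1\subseteq\mathcal D(A_\Gamma)$; $\Gamma(s,t)Y_1\subseteq Y_1$ and $u\mapsto\Gamma(u,t)f$ is $\|\cdot\|_{Y_1}$-continuous for $f\in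 Y_1$; $u\mapsto\Gamma(s,u)f$ is $Y$-continuous on $J(s)$ for $f\in Y$; and $u\mapsto\Gamma(s,u)A_\Gamma(u)f$ is Bochner integrable on $[s,t]$ for $f\in Y_1$. Probabilistic setting: $(\Omega,\mathcal F,\mathbb P)$ complete; $X$ finite with all subsets as $\sigma$-algebra; $(x_n,T_n)_{n\ge0}$ a Markov renewal process ($x_n\in X$, $T_0=0$, $T_n=\sum_{k\le n}\tau_k$, $\tau_k>0$) with semi-Markov kernel $Q$; $N(t)=\sup\{n:T_n\le t\}$, $\Omega$ restricted to the full-measure event $\{N(t)<\infty\ \forall t\in\mathbb Q\}$; $x(t)=x_{N(t)}$; $N_s(t)=N(t)-N(s)$, $T_0(s)=s$, $T_n(s)=T_{N(s)+n}$ ($n\ge1$), $x_n(s)=x(T_n(s))$. $(\Gamma_x)_{x\in X}$ inhomogeneous $Y$-semigroups with generators $A_x$, with $(r,t,x,f)\mapsto\Gamma_x(r\wedge t,r\vee t)f$ jointly measurable; $(D(x,y))_{x,y}\subseteq\mathcal B(Y)$ contractions with $(x,y,f)\mapsto D(x,y)f$ measurable. The random evolution is $V(s,t)=\big[\prod_{k=1}^{N_s(t)}\Gamma_{x_{k-1}(s)}(T_{k-1}(s),T_k(s))D(x_{k-1}(s),x_k(s))\big]\Gamma_{x(t)}(T_{N_s(t)}(s),t)$ (product ordered left to right, empty product $I$), pathwise on $\Delta_J\times\Omega$; $V$ is regular if every $\Gamma_x$ is regular. *)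

theory Defs
  imports "HOL-Probability.Probability"
begin

definition inhom_semigroup :: "real set \<Rightarrow> (real \<Rightarrow> real \<Rightarrow> ('y::real_normed_vector \<Rightarrow>\<^sub>L 'y)) \<Rightarrow> bool" where
  "inhom_semigroup J \<Gamma> \<longleftrightarrow>
     (\<forall>t\<in>J. \<Gamma> t t = id_blinfun) \<and>
     (\<forall>s\<in>J. \<forall>r\<in>J. \<forall>t\<in>J. s \<le> r \<and> r \<le> t \<longrightarrow> \<Gamma> s r o\<^sub>L \<Gamma> r t = \<Gamma> s t)"

text \<open>Both one-sided difference quotients at t converge to L (a one-sided limit
 that is not available inside J is vacuous, since the filter is then trivial).\<close>
definition gen_lims :: "real set \<Rightarrow> (real \<Rightarrow> real \<Rightarrow> ('y::real_normed_vector \<Rightarrow>\<^sub>L 'y)) \<Rightarrow> real \<Rightarrow> 'y \<Rightarrow> 'y \<Rightarrow> bool" where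
  "gen_lims J \<Gamma> t f L \<longleftrightarrow>
     ((\<lambda>h. (1 / h) *\<^sub>R (blinfun_apply (\<Gamma> t (t + h)) f - f)) \<longlongrightarrow> L) (at 0 within {h. 0 < h \<and> t + h \<in> J}) \<and>
     ((\<lambda>h. (1 / h) *\<^sub>R (blinfun_apply (\<Gamma> (t - h) t) f - f)) \<longlongrightarrow> L) (at 0 within {h. 0 < h \<and> t - h \<in> J})"

definition gen_dom :: "real set \<Rightarrow> (real \<Rightarrow> real \<Rightarrow> ('y::real_normed_vector \<Rightarrow>\<^sub>L 'y)) \<Rightarrow> real \<Rightarrow> 'y \<Rightarrow> bool" where
  "gen_dom J \<Gamma> t f \<longleftrightarrow> (\<exists>L. gen_lims J \<Gamma> t f L)"

definition gen :: "real set \<Rightarrow> (real \<Rightarrow> real \<Rightarrow> ('y::real_normed_vector \<Rightarrow>\<^sub>L 'y)) \<Rightarrow> real \<Rightarrow> 'y \<Rightarrow> 'y" where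
  "gen J \<Gamma> t f = (THE L. gen_lims J \<Gamma> t f L)"

text \<open>Regularity. Y1 is modelled as a separable Banach space 'z together with an
 injective bounded linear (continuous) embedding iota into Y.\<close>
definition regular_semigroup ::
  "real set \<Rightarrow> ('z::{banach,second_countable_topology} \<Rightarrow> 'y::{banach,second_countable_topology})
    \<Rightarrow> (real \<Rightarrow> real \<Rightarrow> ('y \<Rightarrow>\<^sub>L 'y)) \<Rightarrow> bool" where
  "regular_semigroup J \<iota> \<Gamma> \<longleftrightarrow>
     inhom_semigroup J \<Gamma> \<and>
     (\<forall>t\<in>J. \<forall>f. gen_dom J \<Gamma> t (\<iota> f)) \<and>
     (\<forall>s\<in>J. \<forall>t\<in>J. s \<le> t \<longrightarrow> (\<forall>f. blinfun_apply (\<Gamma> s t) (\<iota> f) \<in> range \<iota>)) \<and>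
     (\<forall>t\<in>J. \<forall>f. continuous_on {u\<in>J. u \<le> t} (\<lambda>u. the_inv \<iota> (blinfun_apply (\<Gamma> u t) (\<iota> f)))) \<and>
     (\<forall>s\<in>J. \<forall>f. continuous_on {u\<in>J. s \<le> u} (\<lambda>u. blinfun_apply (\<Gamma> s u) f)) \<and>
     (\<forall>s\<in>J. \<forall>t\<in>J. s \<le> t \<longrightarrow> (\<forall>f.
        set_integrable lborel {s..t} (\<lambda>u. blinfun_apply (\<Gamma> s u) (gen J \<Gamma> u (\<iota> f)))))"

definition semi_markov_kernel :: "('x::finite \<Rightarrow> 'x \<Rightarrow> real \<Rightarrow> real) \<Rightarrow> bool" where
  "semi_markov_kernel Q \<longleftrightarrow>
     (\<forall>x y. mono (Q x y) \<and> (\<forall>t. 0 \<le> Q x y t \<and> continuous (at_right t) (Q x y)) \<and> Q x y 0 = 0) \<and>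
     (\<forall>x. ((\<lambda>t. \<Sum>y\<in>UNIV. Q x y t) \<longlongrightarrow> 1) at_top)"

definition mrp_hist :: "'w measure \<Rightarrow> (nat \<Rightarrow> 'w \<Rightarrow> 'x) \<Rightarrow> (nat \<Rightarrow> 'w \<Rightarrow> real) \<Rightarrow> nat \<Rightarrow> 'w set set" where
  "mrp_hist M xs \<tau> n =
     {xs k -` B \<inter> space M | k B. k \<le> n} \<union>
     {\<tau> k -` B \<inter> space M | k B. 1 \<le> k \<and> k \<le> n \<and> B \<in> sets borel}"

definition markov_renewal ::
  "'w measure \<Rightarrow> (nat \<Rightarrow> 'w \<Rightarrow> 'x::finite) \<Rightarrow> (nat \<Rightarrow> 'w \<Rightarrow> real) \<Rightarrow> ('x \<Rightarrow> 'x \<Rightarrow> real \<Rightarrow> real) \<Rightarrow> bool" where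
  "markov_renewal M xs \<tau> Q \<longleftrightarrow>
     (\<forall>n. xs n \<in> measurable M (count_space UNIV)) \<and>
     (\<forall>n. \<tau> n \<in> borel_measurable M) \<and>
     (\<forall>\<omega>\<in>space M. \<forall>k\<ge>1. 0 < \<tau> k \<omega>) \<and>
     (\<forall>n y t A. A \<in> sigma_sets (space M) (mrp_hist M xs \<tau> n) \<longrightarrow>
        measure M ({\<omega>\<in>space M. xs (Suc n) \<omega> = y \<and> \<tau> (Suc n) \<omega> \<le> t} \<inter> A)
          = set_lebesgue_integral M A (\<lambda>\<omega>. Q (xs n \<omega>) y t))"

definition Tn :: "(nat \<Rightarrow> 'w \<Rightarrow> real) \<Rightarrow> nat \<Rightarrow> 'w \<Rightarrow> real" where
  "Tn \<tau> n \<omega> = (\<Sum>k\<in>{1..n}. \<tau> k \<omega>)"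

definition Nc :: "(nat \<Rightarrow> 'w \<Rightarrow> real) \<Rightarrow> real \<Rightarrow> 'w \<Rightarrow> nat" where
  "Nc \<tau> t \<omega> = Max {n. Tn \<tau> n \<omega> \<le> t}"

definition xt :: "(nat \<Rightarrow> 'w \<Rightarrow> real) \<Rightarrow> (nat \<Rightarrow> 'w \<Rightarrow> 'x) \<Rightarrow> real \<Rightarrow> 'w \<Rightarrow> 'x" where
  "xt \<tau> xs t \<omega> = xs (Nc \<tau> t \<omega>) \<omega>"

definition Ns :: "(nat \<Rightarrow> 'w \<Rightarrow> real) \<Rightarrow> real \<Rightarrow> real \<Rightarrow> 'w \<Rightarrow> nat" where
  "Ns \<tau> s t \<omega> = Nc \<tau> t \<omega> - Nc \<tau> s \<omega>"

definition Tks :: "(nat \<Rightarrow> 'w \<Rightarrow> real) \<Rightarrow> real \<Rightarrow> nat \<Rightarrow> 'w \<Rightarrow> real" where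
  "Tks \<tau> s k \<omega> = (if k = 0 then s else Tn \<tau> (Nc \<tau> s \<omega> + k) \<omega>)"

definition xks :: "(nat \<Rightarrow> 'w \<Rightarrow> real) \<Rightarrow> (nat \<Rightarrow> 'w \<Rightarrow> 'x) \<Rightarrow> real \<Rightarrow> nat \<Rightarrow> 'w \<Rightarrow> 'x" where
  "xks \<tau> xs s k \<omega> = xt \<tau> xs (Tks \<tau> s k \<omega>) \<omega>"

fun prodL :: "nat \<Rightarrow> (nat \<Rightarrow> ('y::real_normed_vector \<Rightarrow>\<^sub>L 'y)) \<Rightarrow> ('y \<Rightarrow>\<^sub>L 'y)" where
  "prodL 0 F = id_blinfun"
| "prodL (Suc n) F = prodL n F o\<^sub>L F (Suc n)"

definition rand_evol ::
  "(nat \<Rightarrow> 'w \<Rightarrow> real) \<Rightarrow> (nat \<Rightarrow> 'w \<Rightarrow> 'x) \<Rightarrow> ('x \<Rightarrow> real \<Rightarrow> real \<Rightarrow> ('y::real_normed_vector \<Rightarrow>\<^sub>L 'y))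
    \<Rightarrow> ('x \<Rightarrow> 'x \<Rightarrow> ('y \<Rightarrow>\<^sub>L 'y)) \<Rightarrow> real \<Rightarrow> real \<Rightarrow> 'w \<Rightarrow> ('y \<Rightarrow>\<^sub>L 'y)" where
  "rand_evol \<tau> xs \<Gamma> D s t \<omega> =
     prodL (Ns \<tau> s t \<omega>)
       (\<lambda>k. \<Gamma> (xks \<tau> xs s (k - 1) \<omega>) (Tks \<tau> s (k - 1) \<omega>) (Tks \<tau> s k \<omega>)
            o\<^sub>L D (xks \<tau> xs s (k - 1) \<omega>) (xks \<tau> xs s k \<omega>))
     o\<^sub>L \<Gamma> (xt \<tau> xs t \<omega>) (Tks \<tau> s (Ns \<tau> s t \<omega>) \<omega>) t"

end

theory Submission
  imports Defs
begin


lemma ubp: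
  fixes T :: "'i \<Rightarrow> ('a::banach \<Rightarrow>\<^sub>L 'b::real_normed_vector)"
  assumes pw: "\<And>g. \<exists>B. \<forall>i\<in>I. norm (T i g) \<le> B"
  shows "\<exists>B. \<forall>i\<in>I. norm (T i) \<le> B"
proof -
  define C where "C n = {g. \<forall>i\<in>I. norm (T i g) \<le> real n}" for n::nat
  have cl: "closed (C n)" for n
  proof -
    have "C n = (\<Inter>i\<in>I. {g. norm (T i g) \<le> real n})" by (auto simp: C_def)
    moreover have "closed {g. norm (T i g) \<le> real n}" for i
      by (intro closed_Collect_le continuous_intros)
    ultimately show ?thesis by auto
  qed
  have un0: "UNIV \<subseteq> (\<Union>n. C n)"
  proof
    fix g assume "g \<in> (UNIV::'a set)"
    obtain B where B: "\<forall>i\<in>I. norm (T i g) \<le> B" using pw by blast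
    obtain n where "B \<le> real n" using real_arch_simple by blast
    then have "g \<in> C n" using B by (auto simp: C_def intro: order_trans)
    then show "g \<in> (\<Union>n. C n)" by blast
  qed
  then have un: "(\<Union>n. C n) = UNIV" by auto
  have "\<exists>n. interior (C n) \<noteq> {}"
  proof (rule ccontr)
    assume "\<not> ?thesis"
    then have "euclidean interior_of \<Union> (range C) = {}"
      by (intro Baire_category_alt) (auto simp: completely_metrizable_space_euclidean cl)
    then show False using un by simp
  qed
  then obtain n g0 where "g0 \<in> interior (C n)" by blast
  then obtain e where e: "e > 0" "ball g0 e \<subseteq> C n"
    by (meson mem_interior)
  have g0: "g0 \<in> C n" using e by auto
  have bd: "norm (T i y) \<le> (4 * real n / e) * norm y" if i: "i \<in> I" for i y
  proof (cases "y = 0")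
    case True then show ?thesis by simp
  next
    case False
    define c where "c = e / (2 * norm y)"
    have c: "c > 0" using e False by (simp add: c_def)
    have "dist g0 (g0 + c *\<^sub>R y) = c * norm y" using c by (simp add: dist_norm)
    also have "\<dots> = e/2" using False by (simp add: c_def)
    finally have "g0 + c *\<^sub>R y \<in> C n" using e by auto
    then have 1: "norm (T i (g0 + c *\<^sub>R y)) \<le> n" using i by (auto simp: C_def)
    have 2: "norm (T i g0) \<le> n" using g0 i by (auto simp: C_def)
    have "T i y = (1/c) *\<^sub>R (T i (g0 + c *\<^sub>R y) - T i g0)"
      using c by (simp add: blinfun.bilinear_simps)
    then have "norm (T i y) \<le> (1/c) * (2 * n)"
    proof -
      have "norm (T i (g0 + c *\<^sub>R y) - T i g0) \<le> 2 * n"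
        using 1 2 norm_triangle_ineq4[of "T i (g0 + c *\<^sub>R y)" "T i g0"] by linarith
      then show ?thesis using c \<open>T i y = _\<close> by (simp add: divide_right_mono)
    qed
    also have "\<dots> = (4 * real n / e) * norm y" using False e by (simp add: c_def field_simps)
    finally show ?thesis .
  qed
  show ?thesis
    using bd e by (intro exI[of _ "4 * real n / e"] ballI norm_blinfun_bound) auto
qed

lemma compact_bound:
  fixes T :: "real \<Rightarrow> ('a::banach \<Rightarrow>\<^sub>L 'b::real_normed_vector)"
  assumes "compact K" "\<And>g. continuous_on K (\<lambda>w. T w g)"
  shows "\<exists>B. \<forall>w\<in>K. norm (T w) \<le> B"
proof (rule ubp)
  fix g
  have "compact ((\<lambda>w. T w g) ` K)" using assms by (intro compact_continuous_image)
  then have "bounded ((\<lambda>w. T w g) ` K)" by (rule compact_imp_bounded)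
  then show "\<exists>B. \<forall>w\<in>K. norm (T w g) \<le> B" by (auto simp: bounded_iff)
qed



lemma hk_indicator:
  fixes A :: "'n::euclidean_space set" and y :: "'b::banach"
  assumes "A \<in> sets borel" "emeasure lborel A < \<infinity>"
  shows "((\<lambda>x. indicator A x *\<^sub>R y) has_integral (measure lborel A *\<^sub>R y)) UNIV"
proof -
  have "((\<lambda>x. (1::real) *\<^sub>R y) has_integral (measure lborel A *\<^sub>R y)) A"
    using has_integral_scaleR_left[OF has_integral_measure_lborel[OF assms]] .
  then have "((\<lambda>x. if x \<in> A then (1::real) *\<^sub>R y else 0) has_integral (measure lborel A *\<^sub>R y)) UNIV"
    by (rule has_integral_restrict_UNIV[THEN iffD2])
  moreover have "(\<lambda>x. indicator A x *\<^sub>R y) = (\<lambda>x. if x \<in> A then (1::real) *\<^sub>R y else 0)"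
    by (auto simp: indicator_def fun_eq_iff)
  ultimately show ?thesis by simp
qed

lemma hk_simple:
  fixes f :: "'n::euclidean_space \<Rightarrow> 'b::{banach,second_countable_topology}"
  assumes "Bochner_Integration.simple_bochner_integrable lborel f"
  shows "(f has_integral Bochner_Integration.simple_bochner_integral lborel f) UNIV"
proof -
  from assms have sf: "simple_function lborel f"
    by (cases rule: Bochner_Integration.simple_bochner_integrable.cases) auto
  from assms have fin: "emeasure lborel {y. f y \<noteq> 0} \<noteq> \<infinity>"
    by (cases rule: Bochner_Integration.simple_bochner_integrable.cases) auto
  have finR: "finite (f ` UNIV)" using sf by (auto simp: simple_function_def)
  have eq: "f x = (\<Sum>y\<in>f ` UNIV. indicator {x. f x = y} x *\<^sub>R y)" for x
  proof -
    have "(\<Sum>y\<in>f ` UNIV. indicator {x. f x = y} x *\<^sub>R y) = (\<Sum>y\<in>{f x}. indicator {x. f x = y} x *\<^sub>R y)"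
      using finR by (intro sum.mono_neutral_right) (auto simp: indicator_def)
    then show ?thesis by simp
  qed
  have "((\<lambda>x. \<Sum>y\<in>f ` UNIV. indicator {x. f x = y} x *\<^sub>R y) has_integral
         (\<Sum>y\<in>f ` UNIV. measure lborel {x. f x = y} *\<^sub>R y)) UNIV"
  proof (intro has_integral_sum finR)
    fix y assume "y \<in> f ` UNIV"
    show "((\<lambda>x. indicator {x. f x = y} x *\<^sub>R y) has_integral measure lborel {x. f x = y} *\<^sub>R y) UNIV"
    proof (cases "y = 0")
      case True then show ?thesis by simp
    next
      case False
      have meas: "{x. f x = y} \<in> sets borel"
        using sf \<open>y \<in> f ` UNIV\<close> by (auto simp: simple_function_def vimage_def)
      have fm: "f \<in> borel_measurable lborel"
        by (rule borel_measurable_simple_function[OF sf])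
      have "f -` (- {0}) \<inter> space lborel \<in> sets lborel"
        by (rule measurable_sets[OF fm]) (rule borel_open[OF open_Compl[OF closed_singleton]])
      moreover have "f -` (- {0}) \<inter> space lborel = {y. f y \<noteq> 0}" unfolding space_lborel by auto
      ultimately have ms: "{y. f y \<noteq> 0} \<in> sets lborel" by (simp only:)
      have sub: "{x. f x = y} \<subseteq> {y. f y \<noteq> 0}" using False by auto
      have "emeasure lborel {x. f x = y} \<le> emeasure lborel {y. f y \<noteq> 0}"
        by (rule emeasure_mono[OF sub ms])
      also have "\<dots> < \<infinity>" using fin by (simp add: less_top)
      finally show ?thesis using meas by (intro hk_indicator) auto
    qed
  qed
  moreover have "Bochner_Integration.simple_bochner_integral lborel f = (\<Sum>y\<in>f ` UNIV. measure lborel {x. f x = y} *\<^sub>R y)"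
    by (simp add: Bochner_Integration.simple_bochner_integral_def)
  ultimately have H: "((\<lambda>x. \<Sum>y\<in>f ` UNIV. indicator {x. f x = y} x *\<^sub>R y) has_integral
      Bochner_Integration.simple_bochner_integral lborel f) UNIV" by simp
  show ?thesis by (rule has_integral_eq[OF _ H]) (rule eq[symmetric])
qed

lemma hk_bochner:
  fixes g :: "'n::euclidean_space \<Rightarrow> 'b::{banach,second_countable_topology}"
  assumes gi: "integrable lborel g" and hk: "(g has_integral I) UNIV"
  shows "I = integral\<^sup>L lborel g"
proof -
  from gi obtain x where hbi: "has_bochner_integral lborel g x" by (auto elim: integrable.cases)
  from hbi obtain s where s: "\<And>i. Bochner_Integration.simple_bochner_integrable lborel (s i)"
    and conv: "(\<lambda>i. \<integral>\<^sup>+z. norm (g z - s i z) \<partial>lborel) \<longlonglongrightarrow> 0"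
    and sx: "(\<lambda>i. Bochner_Integration.simple_bochner_integral lborel (s i)) \<longlonglongrightarrow> x"
    by (rule has_bochner_integral.cases) blast
  have xeq: "integral\<^sup>L lborel g = x" using hbi by (rule has_bochner_integral_integral_eq)
  have si: "integrable lborel (s i)" for i
    using has_bochner_integral_simple_bochner_integrable[OF s] by (auto intro: integrable.intros)
  define a where "a i = integral\<^sup>L lborel (\<lambda>z. norm (g z - s i z))" for i
  have ni: "integrable lborel (\<lambda>z. norm (g z - s i z))" for i
    by (intro integrable_norm Bochner_Integration.integrable_diff gi si)
  have enn: "(\<integral>\<^sup>+z. norm (g z - s i z) \<partial>lborel) = ennreal (a i)" for i
    unfolding a_def using ni by (intro nn_integral_eq_integral) auto
  have a0: "a i \<ge> 0" for i unfolding a_def by simp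
  have "(\<lambda>i. ennreal (a i)) \<longlonglongrightarrow> ennreal 0" using conv enn by simp
  then have aconv: "a \<longlonglongrightarrow> 0" using a0 by (subst (asm) tendsto_ennreal_iff) auto
  have bound: "norm (I - x) \<le> a i + norm (Bochner_Integration.simple_bochner_integral lborel (s i) - x)" for i
  proof -
    have "((\<lambda>z. g z - s i z) has_integral (I - Bochner_Integration.simple_bochner_integral lborel (s i))) UNIV"
      using hk hk_simple[OF s] by (rule has_integral_diff)
    then have "norm (I - Bochner_Integration.simple_bochner_integral lborel (s i)) \<le> integral UNIV (\<lambda>z. norm (g z - s i z))"
      using integral_norm_bound_integral[of "\<lambda>z. g z - s i z" UNIV "\<lambda>z. norm (g z - s i z)"]
        integrable_on_lborel[OF ni] by (auto simp: integral_unique integrable_on_def)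
    also have "\<dots> = a i" unfolding a_def using integral_lborel[OF ni] .
    finally show ?thesis using norm_triangle_ineq[of "I - Bochner_Integration.simple_bochner_integral lborel (s i)" "Bochner_Integration.simple_bochner_integral lborel (s i) - x"]
      by simp
  qed
  have "(\<lambda>i. a i + norm (Bochner_Integration.simple_bochner_integral lborel (s i) - x)) \<longlonglongrightarrow> 0 + 0"
    using aconv sx by (intro tendsto_add) (auto intro: tendsto_norm_zero Lim_null[THEN iffD1])
  then have "norm (I - x) \<le> 0"
    using bound by (intro LIMSEQ_le_const) (auto simp: not_le)
  then show ?thesis using xeq by simp
qed



lemma hk_bochner_set:
  fixes g :: "real \<Rightarrow> 'b::{banach,second_countable_topology}"
  assumes "set_integrable lborel S g" "(g has_integral I) S"
  shows "(LINT x:S|lborel. g x) = I"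
proof -
  have "((\<lambda>x. if x \<in> S then g x else 0) has_integral I) UNIV"
    using assms(2) by (rule has_integral_restrict_UNIV[THEN iffD2])
  moreover have "(\<lambda>x. if x \<in> S then g x else 0) = (\<lambda>x. indicator S x *\<^sub>R g x)"
    by (auto simp: indicator_def fun_eq_iff)
  ultimately have "((\<lambda>x. indicator S x *\<^sub>R g x) has_integral I) UNIV" by simp
  then have "I = integral\<^sup>L lborel (\<lambda>x. indicator S x *\<^sub>R g x)"
    using assms(1) unfolding set_integrable_def by (intro hk_bochner) auto
  then show ?thesis by (simp add: set_lebesgue_integral_def)
qed

lemma at_right_sub:
  fixes S :: "real set"
  assumes "0 < e" "{0<..<e} \<subseteq> S"
  shows "at_right 0 \<le> at 0 within S"
proof -
  have "at (0::real) within {0<..<e} = at_right 0"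
    by (rule at_within_nhd[of _ "{-e<..<e}"]) (use assms in auto)
  then show ?thesis using at_le[OF assms(2), of 0] by simp
qed

lemma ev_small: "0 < (e::real) \<Longrightarrow> eventually (\<lambda>h. 0 < h \<and> h < e) (at_right 0)"
  unfolding eventually_at_right_field by auto

lemma vd_from_quot:
  fixes F :: "real \<Rightarrow> 'b::real_normed_vector"
  assumes "((\<lambda>h. (1/h) *\<^sub>R (F (x+h) - F x)) \<longlongrightarrow> D) (at 0)"
  shows "(F has_vector_derivative D) (at x)"
  unfolding has_vector_derivative_def has_derivative_at
proof (intro conjI)
  show "bounded_linear (\<lambda>h. h *\<^sub>R D)" by (rule bounded_linear_scaleR_left)
  have "((\<lambda>h. norm ((1/h) *\<^sub>R (F (x+h) - F x) - D)) \<longlongrightarrow> 0) (at 0)"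
    using tendsto_diff[OF assms tendsto_const[of D]] by (intro tendsto_norm_zero) simp
  moreover have "eventually (\<lambda>h. norm ((1/h) *\<^sub>R (F (x+h) - F x) - D) =
      norm (F (x + h) - F x - h *\<^sub>R D) / norm h) (at (0::real))"
    unfolding eventually_at_filter
  proof (intro always_eventually allI impI)
    fix h :: real assume "h \<noteq> 0"
    have "(1/h) *\<^sub>R (F (x+h) - F x) - D = (1/h) *\<^sub>R (F (x + h) - F x - h *\<^sub>R D)"
      using \<open>h \<noteq> 0\<close> by (simp add: algebra_simps)
    then show "norm ((1/h) *\<^sub>R (F (x+h) - F x) - D) = norm (F (x + h) - F x - h *\<^sub>R D) / norm h"
      by (simp add: divide_inverse mult.commute)
  qed
  ultimately show "((\<lambda>h. norm (F (x + h) - F x - h *\<^sub>R D) / norm h) \<longlongrightarrow> 0) (at 0)"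
    using Lim_transform_eventually by fastforce
qed



lemma sg_deriv:
  fixes \<Gamma> :: "real \<Rightarrow> real \<Rightarrow> ('y::banach \<Rightarrow>\<^sub>L 'y)"
  assumes sg: "inhom_semigroup J \<Gamma>"
    and Jc: "\<And>a b c. a \<in> J \<Longrightarrow> c \<in> J \<Longrightarrow> a \<le> b \<Longrightarrow> b \<le> c \<Longrightarrow> b \<in> J"
    and cont: "\<forall>s\<in>J. \<forall>g. continuous_on {u\<in>J. s \<le> u} (\<lambda>u. \<Gamma> s u g)"
    and lims: "gen_lims J \<Gamma> v g L"
    and r: "r \<in> J" "u \<in> J" "r < v" "v < u"
  shows "((\<lambda>w. \<Gamma> r w g) has_vector_derivative \<Gamma> r v L) (at v)"
proof (rule vd_from_quot)
  define F where "F w = \<Gamma> r w g" for w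
  have vJ: "v \<in> J" by (rule Jc[OF r(1) r(2)]) (use r in auto)
  have comp: "\<Gamma> a b o\<^sub>L \<Gamma> b c = \<Gamma> a c" if "a \<in> J" "b \<in> J" "c \<in> J" "a \<le> b" "b \<le> c" for a b c
    using sg that unfolding inhom_semigroup_def by blast
  have compa: "\<Gamma> a b (\<Gamma> b c x) = \<Gamma> a c x" if "a \<in> J" "b \<in> J" "c \<in> J" "a \<le> b" "b \<le> c" for a b c x
    using comp[OF that] by (metis blinfun_apply_blinfun_compose)
  have evu: "\<forall>\<^sub>F h in at_right 0. 0 < h \<and> h < u - v" using r by (intro ev_small) simp
  have evr: "\<forall>\<^sub>F h in at_right 0. 0 < h \<and> h < v - r" using r by (intro ev_small) simp
  have qR: "((\<lambda>h. (1/h) *\<^sub>R (\<Gamma> v (v+h) g - g)) \<longlongrightarrow> L) (at_right 0)"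
  proof (rule tendsto_mono[OF at_right_sub[of "u - v"]])
    show "0 < u - v" using r by simp
    show "{0<..<u - v} \<subseteq> {h. 0 < h \<and> v + h \<in> J}" using Jc[OF vJ r(2)] by auto
    show "((\<lambda>h. (1/h) *\<^sub>R (\<Gamma> v (v+h) g - g)) \<longlongrightarrow> L) (at 0 within {h. 0 < h \<and> v + h \<in> J})"
      using lims unfolding gen_lims_def by simp
  qed
  have R: "((\<lambda>h. (1/h) *\<^sub>R (F (v+h) - F v)) \<longlongrightarrow> \<Gamma> r v L) (at_right 0)"
  proof (rule Lim_transform_eventually)
    show "((\<lambda>h. \<Gamma> r v ((1/h) *\<^sub>R (\<Gamma> v (v+h) g - g))) \<longlongrightarrow> \<Gamma> r v L) (at_right 0)"
      by (rule blinfun.tendsto[OF tendsto_const qR])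
    show "\<forall>\<^sub>F h in at_right 0. \<Gamma> r v ((1/h) *\<^sub>R (\<Gamma> v (v+h) g - g)) = (1/h) *\<^sub>R (F (v+h) - F v)"
      using evu
    proof (rule eventually_mono)
      fix h assume h: "0 < h \<and> h < u - v"
      then have "v + h \<in> J" using Jc[OF vJ r(2)] by auto
      then show "\<Gamma> r v ((1/h) *\<^sub>R (\<Gamma> v (v+h) g - g)) = (1/h) *\<^sub>R (F (v+h) - F v)"
        using h r vJ compa[of r v "v+h" g] by (simp add: F_def blinfun.scaleR_right blinfun.diff_right)
    qed
  qed
  have pR: "((\<lambda>h. (1/h) *\<^sub>R (\<Gamma> (v-h) v g - g)) \<longlongrightarrow> L) (at_right 0)"
  proof (rule tendsto_mono[OF at_right_sub[of "v - r"]])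
    show "0 < v - r" using r by simp
    show "{0<..<v - r} \<subseteq> {h. 0 < h \<and> v - h \<in> J}" using Jc[OF r(1) vJ] by auto
    show "((\<lambda>h. (1/h) *\<^sub>R (\<Gamma> (v-h) v g - g)) \<longlongrightarrow> L) (at 0 within {h. 0 < h \<and> v - h \<in> J})"
      using lims unfolding gen_lims_def by simp
  qed
  define p where "p h = (1/h) *\<^sub>R (\<Gamma> (v-h) v g - g)" for h
  have contr: "continuous_on {w\<in>J. r \<le> w} (\<lambda>w. \<Gamma> r w x)" for x using cont r by blast
  have sub: "{r..v} \<subseteq> {w\<in>J. r \<le> w}" using Jc[OF r(1) vJ] by auto
  obtain B where B: "\<forall>w\<in>{r..v}. norm (\<Gamma> r w) \<le> B"
    using compact_bound[of "{r..v}" "\<Gamma> r"] continuous_on_subset[OF contr sub] by blast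
  have T1: "((\<lambda>h. \<Gamma> r (v-h) (p h - L)) \<longlongrightarrow> 0) (at_right 0)"
  proof (rule Lim_null_comparison)
    show "\<forall>\<^sub>F h in at_right 0. norm (\<Gamma> r (v-h) (p h - L)) \<le> B * norm (p h - L)"
      using evr
    proof (rule eventually_mono)
      fix h assume h: "0 < h \<and> h < v - r"
      have "norm (\<Gamma> r (v-h) (p h - L)) \<le> norm (\<Gamma> r (v-h)) * norm (p h - L)" by (rule norm_blinfun)
      also have "\<dots> \<le> B * norm (p h - L)" using B h by (intro mult_right_mono) auto
      finally show "norm (\<Gamma> r (v-h) (p h - L)) \<le> B * norm (p h - L)" .
    qed
    have "((\<lambda>h. p h - L) \<longlongrightarrow> 0) (at_right 0)" using pR unfolding p_def by (rule LIM_zero)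
    then have "((\<lambda>h. norm (p h - L)) \<longlongrightarrow> 0) (at_right 0)" by (rule tendsto_norm_zero)
    then show "((\<lambda>h. B * norm (p h - L)) \<longlongrightarrow> 0) (at_right 0)" using tendsto_mult_right_zero by blast
  qed
  have T2: "((\<lambda>h. \<Gamma> r (v-h) L) \<longlongrightarrow> \<Gamma> r v L) (at_right 0)"
  proof -
    have c: "((\<lambda>w. \<Gamma> r w L) \<longlongrightarrow> \<Gamma> r v L) (at v within {w\<in>J. r \<le> w})"
      using contr[of L] vJ r unfolding continuous_on_def by auto
    have f: "filterlim (\<lambda>h. v - h) (at v within {w\<in>J. r \<le> w}) (at_right 0)"
      unfolding filterlim_at
    proof
      show "\<forall>\<^sub>F h in at_right 0. v - h \<in> {w\<in>J. r \<le> w} \<and> v - h \<noteq> v"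
        using evr
      proof (rule eventually_mono)
        fix h assume h: "0 < h \<and> h < v - r"
        then show "v - h \<in> {w\<in>J. r \<le> w} \<and> v - h \<noteq> v" using Jc[OF r(1) vJ, of "v-h"] by auto
      qed
      show "((\<lambda>h. v - h) \<longlongrightarrow> v) (at_right 0)"
        using tendsto_diff[OF tendsto_const[of v] tendsto_ident_at[of 0 "{0<..}"]] by simp
    qed
    show ?thesis using filterlim_compose[OF c f] by simp
  qed
  have L: "((\<lambda>h. (1/(-h)) *\<^sub>R (F (v + -h) - F v)) \<longlongrightarrow> \<Gamma> r v L) (at_right 0)"
  proof (rule Lim_transform_eventually)
    show "((\<lambda>h. \<Gamma> r (v-h) (p h - L) + \<Gamma> r (v-h) L) \<longlongrightarrow> \<Gamma> r v L) (at_right 0)"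
      using tendsto_add[OF T1 T2] by simp
    show "\<forall>\<^sub>F h in at_right 0. \<Gamma> r (v-h) (p h - L) + \<Gamma> r (v-h) L = (1/(-h)) *\<^sub>R (F (v + -h) - F v)"
      using evr
    proof (rule eventually_mono)
      fix h assume h: "0 < h \<and> h < v - r"
      then have vh: "v - h \<in> J" using Jc[OF r(1) vJ] by auto
      have "\<Gamma> r (v-h) (p h - L) + \<Gamma> r (v-h) L = \<Gamma> r (v-h) (p h)"
        by (simp add: blinfun.diff_right)
      also have "\<dots> = (1/h) *\<^sub>R (\<Gamma> r (v-h) (\<Gamma> (v-h) v g) - \<Gamma> r (v-h) g)"
        by (simp add: p_def blinfun.scaleR_right blinfun.diff_right)
      also have "\<dots> = (1/h) *\<^sub>R (F v - F (v-h))"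
        using compa[of r "v-h" v g] vh r vJ h by (simp add: F_def)
      also have "\<dots> = (1/(-h)) *\<^sub>R (F (v + -h) - F v)"
        by (simp add: algebra_simps)
      finally show "\<Gamma> r (v-h) (p h - L) + \<Gamma> r (v-h) L = (1/(-h)) *\<^sub>R (F (v + -h) - F v)" .
    qed
  qed
  have L': "((\<lambda>h. (1/h) *\<^sub>R (F (v+h) - F v)) \<longlongrightarrow> \<Gamma> r v L) (at_left 0)"
    using L by (subst filterlim_at_left_to_right) simp
  show "((\<lambda>h. (1/h) *\<^sub>R (\<Gamma> r (v+h) g - \<Gamma> r v g)) \<longlongrightarrow> \<Gamma> r v L) (at 0)"
    using filterlim_split_at[OF L' R] unfolding F_def .
qed



lemma gen_spec:
  assumes dom: "gen_dom J \<Gamma> v g" and Jc: "\<And>a b c. a \<in> J \<Longrightarrow> c \<in> J \<Longrightarrow> a \<le> b \<Longrightarrow> b \<le> c \<Longrightarrow> b \<in> J"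
    and v: "v \<in> J" "u \<in> J" "v < u"
  shows "gen_lims J \<Gamma> v g (gen J \<Gamma> v g)"
proof -
  have le: "at_right 0 \<le> at (0::real) within {h. 0 < h \<and> v + h \<in> J}"
    by (rule at_right_sub[of "u - v"]) (use v Jc[OF v(1) v(2)] in auto)
  have nt: "at (0::real) within {h. 0 < h \<and> v + h \<in> J} \<noteq> bot"
    using le trivial_limit_at_right_real by (metis bot.extremum_uniqueI)
  have "\<exists>!L. gen_lims J \<Gamma> v g L"
  proof -
    obtain L where L: "gen_lims J \<Gamma> v g L" using dom unfolding gen_dom_def by blast
    moreover have "L' = L" if "gen_lims J \<Gamma> v g L'" for L'
      using tendsto_unique[OF nt] that L unfolding gen_lims_def by blast
    ultimately show ?thesis by blast
  qed
  then show ?thesis unfolding gen_def by (rule theI')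
qed

lemma sg_integral:
  fixes \<iota> :: "'z::{banach,second_countable_topology} \<Rightarrow> 'y::{banach,second_countable_topology}"
  assumes reg: "regular_semigroup J \<iota> \<Gamma>"
    and Jc: "\<And>a b c. a \<in> J \<Longrightarrow> c \<in> J \<Longrightarrow> a \<le> b \<Longrightarrow> b \<le> c \<Longrightarrow> b \<in> J"
    and r: "r \<in> J" "u \<in> J" "r \<le> u"
  shows "set_integrable lborel {r..u} (\<lambda>v. \<Gamma> r v (gen J \<Gamma> v (\<iota> f)))"
    and "(LINT v:{r..u}|lborel. \<Gamma> r v (gen J \<Gamma> v (\<iota> f))) = \<Gamma> r u (\<iota> f) - \<iota> f"
proof -
  show si: "set_integrable lborel {r..u} (\<lambda>v. \<Gamma> r v (gen J \<Gamma> v (\<iota> f)))"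
    using reg r unfolding regular_semigroup_def by blast
  have sg: "inhom_semigroup J \<Gamma>" using reg unfolding regular_semigroup_def by blast
  have cont: "\<forall>s\<in>J. \<forall>g. continuous_on {u\<in>J. s \<le> u} (\<lambda>u. \<Gamma> s u g)"
    using reg unfolding regular_semigroup_def by blast
  have dom: "\<forall>t\<in>J. \<forall>f. gen_dom J \<Gamma> t (\<iota> f)"
    using reg unfolding regular_semigroup_def by blast
  have id: "\<Gamma> r r = id_blinfun" using sg r unfolding inhom_semigroup_def by blast
  have "((\<lambda>v. \<Gamma> r v (gen J \<Gamma> v (\<iota> f))) has_integral (\<Gamma> r u (\<iota> f) - \<Gamma> r r (\<iota> f))) {r..u}"
  proof (rule fundamental_theorem_of_calculus_interior[OF r(3)])
    have "{r..u} \<subseteq> {w\<in>J. r \<le> w}" using Jc[OF r(1) r(2)] by auto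
    then show "continuous_on {r..u} (\<lambda>w. \<Gamma> r w (\<iota> f))"
      using cont r by (blast intro: continuous_on_subset)
  next
    fix x assume x: "x \<in> {r<..<u}"
    have xJ: "x \<in> J" by (rule Jc[OF r(1) r(2)]) (use x in auto)
    have gl: "gen_lims J \<Gamma> x (\<iota> f) (gen J \<Gamma> x (\<iota> f))"
      by (rule gen_spec[OF _ Jc xJ r(2)]) (use dom xJ x in auto)
    show "((\<lambda>w. \<Gamma> r w (\<iota> f)) has_vector_derivative \<Gamma> r x (gen J \<Gamma> x (\<iota> f))) (at x)"
      using sg_deriv[OF sg Jc cont gl r(1) r(2)] x by auto
  qed
  then show "(LINT v:{r..u}|lborel. \<Gamma> r v (gen J \<Gamma> v (\<iota> f))) = \<Gamma> r u (\<iota> f) - \<iota> f"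
    using hk_bochner_set[OF si] id by simp
qed



lemma Tn_0 [simp]: "Tn \<tau> 0 \<omega> = 0" by (simp add: Tn_def)
lemma Tn_Suc: "Tn \<tau> (Suc n) \<omega> = Tn \<tau> n \<omega> + \<tau> (Suc n) \<omega>"
  by (simp add: Tn_def add.commute)

locale renew =
  fixes \<tau> :: "nat \<Rightarrow> 'w \<Rightarrow> real" and \<omega> :: 'w
  assumes pos: "\<And>k. 1 \<le> k \<Longrightarrow> 0 < \<tau> k \<omega>"
    and fin: "\<And>r. r \<in> \<rat> \<Longrightarrow> finite {n. Tn \<tau> n \<omega> \<le> r}"
begin

lemma smono: "strict_mono (\<lambda>n. Tn \<tau> n \<omega>)"
  by (rule strict_mono_Suc_iff[THEN iffD2]) (simp add: Tn_Suc pos)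

lemma Tn_less_iff: "Tn \<tau> i \<omega> < Tn \<tau> j \<omega> \<longleftrightarrow> i < j"
  using strict_mono_less[OF smono, of i j] by simp
lemma Tn_le_iff: "Tn \<tau> i \<omega> \<le> Tn \<tau> j \<omega> \<longleftrightarrow> i \<le> j"
  using strict_mono_less_eq[OF smono, of i j] by simp

lemma Tn_nonneg: "0 \<le> Tn \<tau> n \<omega>"
  using Tn_le_iff[of 0 n] by simp

lemma finite_le: "finite {n. Tn \<tau> n \<omega> \<le> y}"
proof -
  have "{n. Tn \<tau> n \<omega> \<le> y} \<subseteq> {n. Tn \<tau> n \<omega> \<le> of_int \<lceil>y\<rceil>}"
    by (auto intro: order_trans[OF _ le_of_int_ceiling])
  moreover have "finite {n. Tn \<tau> n \<omega> \<le> of_int \<lceil>y\<rceil>}" by (rule fin) simp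
  ultimately show ?thesis by (rule finite_subset)
qed

lemma Nc_char:
  assumes "0 \<le> y"
  shows "Tn \<tau> (Nc \<tau> y \<omega>) \<omega> \<le> y" "y < Tn \<tau> (Suc (Nc \<tau> y \<omega>)) \<omega>"
proof -
  have ne: "0 \<in> {n. Tn \<tau> n \<omega> \<le> y}" using assms by simp
  have "Max {n. Tn \<tau> n \<omega> \<le> y} \<in> {n. Tn \<tau> n \<omega> \<le> y}"
    by (rule Max_in[OF finite_le]) (use ne in blast)
  then show "Tn \<tau> (Nc \<tau> y \<omega>) \<omega> \<le> y"
    unfolding Nc_def by simp
  show "y < Tn \<tau> (Suc (Nc \<tau> y \<omega>)) \<omega>"
  proof (rule ccontr)
    assume "\<not> ?thesis"
    then have "Suc (Nc \<tau> y \<omega>) \<le> Nc \<tau> y \<omega>"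
      unfolding Nc_def by (intro Max_ge[OF finite_le]) auto
    then show False by simp
  qed
qed

lemma Nc_eq:
  assumes "0 \<le> y" "Tn \<tau> j \<omega> \<le> y" "y < Tn \<tau> (Suc j) \<omega>"
  shows "Nc \<tau> y \<omega> = j"
proof -
  note c = Nc_char[OF assms(1)]
  have "\<not> Nc \<tau> y \<omega> > j"
  proof
    assume "Nc \<tau> y \<omega> > j"
    then have "Tn \<tau> (Suc j) \<omega> \<le> Tn \<tau> (Nc \<tau> y \<omega>) \<omega>" by (simp add: Tn_le_iff)
    then show False using c assms by simp
  qed
  moreover have "\<not> Nc \<tau> y \<omega> < j"
  proof
    assume "Nc \<tau> y \<omega> < j"
    then have "Tn \<tau> (Suc (Nc \<tau> y \<omega>)) \<omega> \<le> Tn \<tau> j \<omega>" by (simp add: Tn_le_iff)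
    then show False using c assms by simp
  qed
  ultimately show ?thesis by simp
qed

lemma Nc_mono: "0 \<le> x \<Longrightarrow> x \<le> y \<Longrightarrow> Nc \<tau> x \<omega> \<le> Nc \<tau> y \<omega>"
  using Nc_char(1)[of x] unfolding Nc_def[of \<tau> y] by (intro Max_ge[OF finite_le]) auto

context
  fixes s :: real
  assumes s0: "0 \<le> s"
begin

abbreviation "T' k \<equiv> Tks \<tau> s k \<omega>"
abbreviation "N0 \<equiv> Nc \<tau> s \<omega>"

lemma T'_Suc: "T' (Suc m) = Tn \<tau> (Suc (N0 + m)) \<omega>" by (simp add: Tks_def)
lemma T'_low: "Tn \<tau> (N0 + m) \<omega> \<le> T' m"
  using Nc_char(1)[OF s0] by (cases m) (auto simp: Tks_def)

lemma T'_less: "T' m < T' (Suc m)"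
proof (cases m)
  case 0 then show ?thesis using Nc_char(2)[OF s0] by (simp add: Tks_def)
next
  case (Suc k) then show ?thesis by (simp add: Tks_def Tn_less_iff)
qed

lemma T'_smono: "strict_mono T'"
  by (rule strict_mono_Suc_iff[THEN iffD2]) (simp add: T'_less)

lemma T'_ge: "s \<le> T' m"
  using strict_mono_less_eq[OF T'_smono, of 0 m] by (simp add: Tks_def)

lemma Nc_piece:
  assumes "T' m \<le> v" "v < T' (Suc m)"
  shows "Nc \<tau> v \<omega> = N0 + m"
  using T'_low[of m] assms T'_ge[of m] s0 by (intro Nc_eq) (auto simp: T'_Suc)

lemma Ns_piece:
  assumes "T' m \<le> v" "v < T' (Suc m)"
  shows "Ns \<tau> s v \<omega> = m" "xt \<tau> xs v \<omega> = xks \<tau> xs s m \<omega>"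
  using Nc_piece[OF assms] Nc_piece[OF order_refl T'_less[of m]]
  by (auto simp: Ns_def xt_def xks_def)

lemma rv_piece:
  assumes "T' m \<le> v" "v < T' (Suc m)"
  shows "rand_evol \<tau> xs \<Gamma> D s v \<omega> =
     prodL m (\<lambda>k. \<Gamma> (xks \<tau> xs s (k - 1) \<omega>) (T' (k - 1)) (T' k)
            o\<^sub>L D (xks \<tau> xs s (k - 1) \<omega>) (xks \<tau> xs s k \<omega>))
     o\<^sub>L \<Gamma> (xks \<tau> xs s m \<omega>) (T' m) v"
  using Ns_piece(1)[OF assms] Ns_piece(2)[OF assms, of xs] by (simp add: rand_evol_def)

lemma t_piece:
  assumes "s \<le> t"
  shows "T' (Ns \<tau> s t \<omega>) \<le> t" "t < T' (Suc (Ns \<tau> s t \<omega>))"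
proof -
  have t0: "0 \<le> t" using s0 assms by simp
  have m: "N0 \<le> Nc \<tau> t \<omega>" using Nc_mono[OF s0 assms] .
  have e: "N0 + Ns \<tau> s t \<omega> = Nc \<tau> t \<omega>" using m by (simp add: Ns_def)
  show "t < T' (Suc (Ns \<tau> s t \<omega>))" using Nc_char(2)[OF t0] e by (simp add: T'_Suc)
  show "T' (Ns \<tau> s t \<omega>) \<le> t"
  proof (cases "Ns \<tau> s t \<omega>")
    case 0 then show ?thesis using assms by (simp add: Tks_def)
  next
    case (Suc k) then show ?thesis using Nc_char(1)[OF t0] e by (simp add: Tks_def)
  qed
qed

end
end



lemma main:
  fixes xs :: "nat \<Rightarrow> 'w \<Rightarrow> 'x"
    and \<tau> :: "nat \<Rightarrow> 'w \<Rightarrow> real"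
    and J :: "real set"
    and \<iota> :: "'z::{banach,second_countable_topology} \<Rightarrow> 'y::{banach,second_countable_topology}"
    and \<Gamma> :: "'x \<Rightarrow> real \<Rightarrow> real \<Rightarrow> ('y \<Rightarrow>\<^sub>L 'y)"
    and D :: "'x \<Rightarrow> 'x \<Rightarrow> ('y \<Rightarrow>\<^sub>L 'y)"
    and s t :: real and f :: 'z and \<omega> :: 'w
  assumes rn: "renew \<tau> \<omega>"
    and Jc: "\<And>a b c. a \<in> J \<Longrightarrow> c \<in> J \<Longrightarrow> a \<le> b \<Longrightarrow> b \<le> c \<Longrightarrow> b \<in> J"
    and reg: "\<forall>x. regular_semigroup J \<iota> (\<Gamma> x)"
    and s0: "0 \<le> s" and sJ: "s \<in> J" and tJ: "t \<in> J" and st: "s \<le> t"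
  shows "(\<forall>k\<in>{1..Ns \<tau> s t \<omega>}. \<exists>L.
            ((\<lambda>u. blinfun_apply (rand_evol \<tau> xs \<Gamma> D s u \<omega>)
                    (blinfun_apply (D (xks \<tau> xs s (k - 1) \<omega>) (xks \<tau> xs s k \<omega>) - id_blinfun) (\<iota> f)))
              \<longlongrightarrow> L) (at_left (Tks \<tau> s k \<omega>)))
       \<and> set_integrable lborel {s..t}
           (\<lambda>u. blinfun_apply (rand_evol \<tau> xs \<Gamma> D s u \<omega>) (gen J (\<Gamma> (xt \<tau> xs u \<omega>)) u (\<iota> f)))
       \<and> blinfun_apply (rand_evol \<tau> xs \<Gamma> D s t \<omega>) (\<iota> f)
           = \<iota> f
             + set_lebesgue_integral lborel {s..t}
                 (\<lambda>u. blinfun_apply (rand_evol \<tau> xs \<Gamma> D s u \<omega>) (gen J (\<Gamma> (xt \<tau> xs u \<omega>)) u (\<iota> f)))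
             + (\<Sum>k\<in>{1..Ns \<tau> s t \<omega>}.
                  Lim (at_left (Tks \<tau> s k \<omega>))
                    (\<lambda>u. blinfun_apply (rand_evol \<tau> xs \<Gamma> D s u \<omega>)
                      (blinfun_apply (D (xks \<tau> xs s (k - 1) \<omega>) (xks \<tau> xs s k \<omega>) - id_blinfun) (\<iota> f))))"
proof -
  interpret renew \<tau> \<omega> by (rule rn)
  define n where "n = Ns \<tau> s t \<omega>"
  define g where "g = \<iota> f"
  define T where "T k = Tks \<tau> s k \<omega>" for k
  define x where "x k = xks \<tau> xs s k \<omega>" for k
  define Fk where "Fk = (\<lambda>k. \<Gamma> (x (k - 1)) (T (k - 1)) (T k) o\<^sub>L D (x (k - 1)) (x k))"
  define P where "P m = prodL m Fk" for m
  define V where "V u = rand_evol \<tau> xs \<Gamma> D s u \<omega>" for u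
  define G where "G v = V v (gen J (\<Gamma> (xt \<tau> xs v \<omega>)) v g)" for v
  define Lk where "Lk k = Lim (at_left (T k)) (\<lambda>u. V u ((D (x (k-1)) (x k) - id_blinfun) g))" for k
  have rvp: "V v = P m o\<^sub>L \<Gamma> (x m) (T m) v" if "T m \<le> v" "v < T (Suc m)" for m v
    using rv_piece[OF s0, of m v xs \<Gamma> D] that
    unfolding V_def P_def Fk_def T_def x_def by simp
  have xtp: "xt \<tau> xs v \<omega> = x m" if "T m \<le> v" "v < T (Suc m)" for m v
    using Ns_piece(2)[OF s0, of m v xs] that unfolding T_def x_def by simp
  have Tless: "T m < T (Suc m)" for m using T'_less[OF s0] unfolding T_def .
  have Tmono: "T i \<le> T j" if "i \<le> j" for i j
    using strict_mono_less_eq[OF T'_smono[OF s0], of i j] that unfolding T_def by simp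
  have Tge: "s \<le> T m" for m using T'_ge[OF s0] unfolding T_def .
  have Tn: "T n \<le> t" "t < T (Suc n)" using t_piece[OF s0 st] unfolding T_def n_def by auto
  have TJ: "T m \<in> J" if "m \<le> n" for m
    using Jc[OF sJ tJ Tge[of m]] Tmono[OF that] Tn by simp
  have regx: "regular_semigroup J \<iota> (\<Gamma> y)" for y using reg by blast
  have limk: "((\<lambda>u. V u y) \<longlongrightarrow> P m (\<Gamma> (x m) (T m) (T (Suc m)) y)) (at_left (T (Suc m)))"
    if "m < n" for m y
  proof -
    have cont: "continuous_on {w\<in>J. T m \<le> w} (\<lambda>w. \<Gamma> (x m) (T m) w y)"
      using regx[of "x m"] TJ[of m] that unfolding regular_semigroup_def by auto
    have J1: "T (Suc m) \<in> J" using TJ[of "Suc m"] that by simp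
    have c: "((\<lambda>w. \<Gamma> (x m) (T m) w y) \<longlongrightarrow> \<Gamma> (x m) (T m) (T (Suc m)) y)
              (at (T (Suc m)) within {w\<in>J. T m \<le> w})"
      using cont J1 Tless[of m] unfolding continuous_on_def by auto
    have eqf: "at (T (Suc m)) within {..<T (Suc m)} = at (T (Suc m)) within {T m<..<T (Suc m)}"
      by (rule at_within_nhd[of _ "{T m<..}"]) (use Tless[of m] in auto)
    have sub: "{T m<..<T (Suc m)} \<subseteq> {w\<in>J. T m \<le> w}"
      using Jc[OF TJ[of m] J1] that by auto
    have c2: "((\<lambda>w. \<Gamma> (x m) (T m) w y) \<longlongrightarrow> \<Gamma> (x m) (T m) (T (Suc m)) y) (at_left (T (Suc m)))"
      using tendsto_mono[OF at_le[OF sub] c] eqf by simp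
    have ev: "\<forall>\<^sub>F u in at_left (T (Suc m)). P m (\<Gamma> (x m) (T m) u y) = V u y"
    proof -
      have "\<forall>\<^sub>F u in at_left (T (Suc m)). T m < u \<and> u < T (Suc m)"
        unfolding eventually_at_left_field using Tless[of m] by auto
      then show ?thesis
      proof (rule eventually_mono)
        fix u assume "T m < u \<and> u < T (Suc m)"
        then show "P m (\<Gamma> (x m) (T m) u y) = V u y" using rvp[of m u] by simp
      qed
    qed
    show ?thesis
      by (rule Lim_transform_eventually[OF blinfun.tendsto[OF tendsto_const c2] ev])
  qed
  have piece: "set_integrable lborel {T m..u} G \<and>
      (LINT v:{T m..u}|lborel. G v) = P m (\<Gamma> (x m) (T m) u g - g)"
    if m: "m \<le> n" "T m \<le> u" "u \<le> t" "u \<le> T (Suc m)" for m u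
  proof -
    have Jm: "T m \<in> J" using TJ[OF m(1)] .
    have uJ: "u \<in> J" using Jc[OF sJ tJ, of u] Tge[of m] m by simp
    note si = sg_integral(1)[OF regx[of "x m"] Jc Jm uJ m(2), where f=f]
    note sv = sg_integral(2)[OF regx[of "x m"] Jc Jm uJ m(2), where f=f]
    define h where "h v = P m (\<Gamma> (x m) (T m) v (gen J (\<Gamma> (x m)) v g))" for v
    have ind: "(\<lambda>v. indicator {T m..u} v *\<^sub>R h v) =
        (\<lambda>v. P m (indicator {T m..u} v *\<^sub>R \<Gamma> (x m) (T m) v (gen J (\<Gamma> (x m)) v g)))"
      by (simp add: h_def blinfun.scaleR_right)
    have ii: "integrable lborel (\<lambda>v. indicator {T m..u} v *\<^sub>R \<Gamma> (x m) (T m) v (gen J (\<Gamma> (x m)) v g))"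
      using si unfolding set_integrable_def g_def .
    have hi: "integrable lborel (\<lambda>v. indicator {T m..u} v *\<^sub>R h v)"
      unfolding ind by (rule integrable_bounded_linear[OF blinfun.bounded_linear_right ii])
    have hv: "integral\<^sup>L lborel (\<lambda>v. indicator {T m..u} v *\<^sub>R h v) = P m (\<Gamma> (x m) (T m) u g - g)"
      unfolding ind integral_bounded_linear[OF blinfun.bounded_linear_right ii]
      using sv unfolding set_lebesgue_integral_def g_def by simp
    have eq: "indicator {T m..u} v *\<^sub>R h v = indicator {T m..u} v *\<^sub>R G v" if "v \<notin> {u}" for v
    proof (cases "v \<in> {T m..u}")
      case True
      then have v: "T m \<le> v" "v < T (Suc m)" using that m by auto
      show ?thesis using rvp[OF v] xtp[OF v] by (simp add: G_def h_def)
    qed simp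
    have "integrable lborel (\<lambda>v. indicator {T m..u} v *\<^sub>R G v)"
      using hi integrable_discrete_difference[of "{u}" lborel "\<lambda>v. indicator {T m..u} v *\<^sub>R h v"
          "\<lambda>v. indicator {T m..u} v *\<^sub>R G v"] eq by simp
    moreover have "integral\<^sup>L lborel (\<lambda>v. indicator {T m..u} v *\<^sub>R G v) = P m (\<Gamma> (x m) (T m) u g - g)"
      using hv integral_discrete_difference[of "{u}" lborel "\<lambda>v. indicator {T m..u} v *\<^sub>R h v"
          "\<lambda>v. indicator {T m..u} v *\<^sub>R G v"] eq by simp
    ultimately show ?thesis unfolding set_integrable_def set_lebesgue_integral_def by simp
  qed
  have claim: "\<forall>u. T m \<le> u \<and> u \<le> t \<and> u \<le> T (Suc m) \<longrightarrow>
      set_integrable lborel {s..u} G \<and>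
      P m (\<Gamma> (x m) (T m) u g) = g + (LINT v:{s..u}|lborel. G v) + (\<Sum>k\<in>{1..m}. Lk k)"
    if "m \<le> n" for m
    using that
  proof (induction m)
    case 0
    have T0: "T 0 = s" by (simp add: T_def Tks_def)
    have P0: "P 0 = id_blinfun" by (simp add: P_def)
    show ?case
    proof (intro allI impI)
      fix u assume u: "T 0 \<le> u \<and> u \<le> t \<and> u \<le> T (Suc 0)"
      then show "set_integrable lborel {s..u} G \<and>
          P 0 (\<Gamma> (x 0) (T 0) u g) = g + (LINT v:{s..u}|lborel. G v) + (\<Sum>k\<in>{1..0}. Lk k)"
        using piece[of 0 u] T0 P0 by simp
    qed
  next
    case (Suc m)
    have mn: "m < n" using Suc.prems by simp
    have T1t: "T (Suc m) \<le> t" using Tmono[OF Suc.prems] Tn by simp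
    have IH: "set_integrable lborel {s..T (Suc m)} G \<and>
      P m (\<Gamma> (x m) (T m) (T (Suc m)) g) = g + (LINT v:{s..T (Suc m)}|lborel. G v) + (\<Sum>k\<in>{1..m}. Lk k)"
      using Suc.IH[OF less_imp_le[OF mn]] T1t Tless[of m] by auto
    have Lsm: "Lk (Suc m) = P m (\<Gamma> (x m) (T m) (T (Suc m)) ((D (x m) (x (Suc m)) - id_blinfun) g))"
      unfolding Lk_def by (rule tendsto_Lim[OF trivial_limit_at_left_real]) (use limk[OF mn] in simp)
    have PS: "P (Suc m) = P m o\<^sub>L (\<Gamma> (x m) (T m) (T (Suc m)) o\<^sub>L D (x m) (x (Suc m)))"
      by (simp add: P_def Fk_def)
    show ?case
    proof (intro allI impI)
      fix u assume u: "T (Suc m) \<le> u \<and> u \<le> t \<and> u \<le> T (Suc (Suc m))"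
      note pc = piece[OF Suc.prems, of u]
      have un: "{s..u} = {s..T (Suc m)} \<union> {T (Suc m)..u}" using u Tge[of "Suc m"] by auto
      have si: "set_integrable lborel {s..u} G"
        unfolding un using IH pc u by (intro set_integrable_Un) auto
      have ae: "AE v in lborel. \<not> (v \<in> {s..T (Suc m)} \<and> v \<in> {T (Suc m)..u})"
        using AE_lborel_singleton[of "T (Suc m)"] by eventually_elim auto
      have iv: "(LINT v:{s..u}|lborel. G v) = (LINT v:{s..T (Suc m)}|lborel. G v) + (LINT v:{T (Suc m)..u}|lborel. G v)"
        unfolding un using IH pc u ae by (intro set_integral_Un_AE) auto
      define a where "a = P m (\<Gamma> (x m) (T m) (T (Suc m)) g)"
      define b where "b = P (Suc m) g"
      define c where "c = P (Suc m) (\<Gamma> (x (Suc m)) (T (Suc m)) u g)"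
      define I1 where "I1 = (LINT v:{s..T (Suc m)}|lborel. G v)"
      define I2 where "I2 = (LINT v:{T (Suc m)..u}|lborel. G v)"
      define S where "S = (\<Sum>k\<in>{1..m}. Lk k)"
      have A: "a = g + I1 + S" using IH unfolding a_def I1_def S_def by simp
      have B: "I2 = c - b" using pc u unfolding I2_def c_def b_def by (simp add: blinfun.diff_right)
      have C: "Lk (Suc m) = b - a" using Lsm PS unfolding a_def b_def
        by (simp add: blinfun.diff_right blinfun.diff_left)
      have "g + (LINT v:{s..u}|lborel. G v) + (\<Sum>k\<in>{1..Suc m}. Lk k) = g + (I1 + I2) + (S + Lk (Suc m))"
        unfolding iv I1_def I2_def S_def by simp
      also have "\<dots> = c + (g + I1 + S - a)" unfolding B C by (simp add: algebra_simps)
      also have "\<dots> = c" using A by simp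
      finally have "P (Suc m) (\<Gamma> (x (Suc m)) (T (Suc m)) u g) =
          g + (LINT v:{s..u}|lborel. G v) + (\<Sum>k\<in>{1..Suc m}. Lk k)" unfolding c_def by simp
      with si show "set_integrable lborel {s..u} G \<and>
          P (Suc m) (\<Gamma> (x (Suc m)) (T (Suc m)) u g) = g + (LINT v:{s..u}|lborel. G v) + (\<Sum>k\<in>{1..Suc m}. Lk k)"
        by simp
    qed
  qed
  have fin: "set_integrable lborel {s..t} G \<and>
      P n (\<Gamma> (x n) (T n) t g) = g + (LINT v:{s..t}|lborel. G v) + (\<Sum>k\<in>{1..n}. Lk k)"
    using claim[of n] Tn by auto
  have Vt: "V t = P n o\<^sub>L \<Gamma> (x n) (T n) t" using rvp[OF Tn] .
  have lims: "\<forall>k\<in>{1..n}. \<exists>L. ((\<lambda>u. V u ((D (x (k-1)) (x k) - id_blinfun) g)) \<longlongrightarrow> L) (at_left (T k))"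
  proof
    fix k assume k: "k \<in> {1..n}"
    then obtain m where "k = Suc m" "m < n" by (cases k) auto
    then show "\<exists>L. ((\<lambda>u. V u ((D (x (k-1)) (x k) - id_blinfun) g)) \<longlongrightarrow> L) (at_left (T k))"
      using limk by auto
  qed
  show ?thesis
    using fin Vt lims unfolding n_def g_def T_def x_def V_def G_def Lk_def by simp
qed


theorem proposition3p4:
  fixes M :: "'w measure"
    and xs :: "nat \<Rightarrow> 'w \<Rightarrow> 'x::finite"
    and \<tau> :: "nat \<Rightarrow> 'w \<Rightarrow> real"
    and Q :: "'x \<Rightarrow> 'x \<Rightarrow> real \<Rightarrow> real"
    and J :: "real set"
    and \<iota> :: "'z::{banach,second_countable_topology} \<Rightarrow> 'y::{banach,second_countable_topology}"
    and \<Gamma> :: "'x \<Rightarrow> real \<Rightarrow> real \<Rightarrow> ('y \<Rightarrow>\<^sub>L 'y)"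
    and D :: "'x \<Rightarrow> 'x \<Rightarrow> ('y \<Rightarrow>\<^sub>L 'y)"
    and s t :: real and f :: 'z and \<omega> :: 'w
  assumes "prob_space M"
    and "complete_measure M"
    and "markov_renewal M xs \<tau> Q"
    and "semi_markov_kernel Q"
    and "\<forall>\<omega>'\<in>space M. \<forall>r\<in>\<rat>. finite {n. Tn \<tau> n \<omega>' \<le> r}"
    and "J = {0..} \<or> (\<exists>T>0. J = {0..T})"
    and "bounded_linear \<iota>" and "inj \<iota>"
    and "\<forall>x. regular_semigroup J \<iota> (\<Gamma> x)"
    and "\<forall>x. (\<lambda>(r, r', g). blinfun_apply (\<Gamma> x (min r r') (max r r')) g)
               \<in> borel_measurable (restrict_space borel (J \<times> J \<times> UNIV))"
    and "\<forall>x y. norm (D x y) \<le> 1"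
    and "\<omega> \<in> space M" and "s \<in> J" and "t \<in> J" and "s \<le> t"
  shows "(\<forall>k\<in>{1..Ns \<tau> s t \<omega>}. \<exists>L.
            ((\<lambda>u. blinfun_apply (rand_evol \<tau> xs \<Gamma> D s u \<omega>)
                    (blinfun_apply (D (xks \<tau> xs s (k - 1) \<omega>) (xks \<tau> xs s k \<omega>) - id_blinfun) (\<iota> f)))
              \<longlongrightarrow> L) (at_left (Tks \<tau> s k \<omega>)))
       \<and> set_integrable lborel {s..t}
           (\<lambda>u. blinfun_apply (rand_evol \<tau> xs \<Gamma> D s u \<omega>) (gen J (\<Gamma> (xt \<tau> xs u \<omega>)) u (\<iota> f)))
       \<and> blinfun_apply (rand_evol \<tau> xs \<Gamma> D s t \<omega>) (\<iota> f)
           = \<iota> f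
             + set_lebesgue_integral lborel {s..t}
                 (\<lambda>u. blinfun_apply (rand_evol \<tau> xs \<Gamma> D s u \<omega>) (gen J (\<Gamma> (xt \<tau> xs u \<omega>)) u (\<iota> f)))
             + (\<Sum>k\<in>{1..Ns \<tau> s t \<omega>}.
                  Lim (at_left (Tks \<tau> s k \<omega>))
                    (\<lambda>u. blinfun_apply (rand_evol \<tau> xs \<Gamma> D s u \<omega>)
                      (blinfun_apply (D (xks \<tau> xs s (k - 1) \<omega>) (xks \<tau> xs s k \<omega>) - id_blinfun) (\<iota> f))))"
proof -
  have pos: "\<And>k. 1 \<le> k \<Longrightarrow> 0 < \<tau> k \<omega>"
    using assms(3) assms(12) unfolding markov_renewal_def by blast
  have fin: "\<And>r. r \<in> \<rat> \<Longrightarrow> finite {n. Tn \<tau> n \<omega> \<le> r}"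
    using assms(5) assms(12) by blast
  have rn: "renew \<tau> \<omega>" by (unfold_locales) (use pos fin in auto)
  have Jc: "\<And>a b c. a \<in> J \<Longrightarrow> c \<in> J \<Longrightarrow> a \<le> b \<Longrightarrow> b \<le> c \<Longrightarrow> b \<in> J"
    using assms(6) by auto
  have s0: "0 \<le> s" using assms(6) assms(13) by auto
  show ?thesis
    by (rule main[OF rn Jc assms(9) s0 assms(13) assms(14) assms(15)])
qed

end
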